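(* Let $S_1,\dots,S_n\subseteq[N]$ and $k\ge1$. Let $\mathbb F$ be a field of characteristic $2$ with $|\mathbb F|\ge N$, and let $f:[N]\to\mathbb F$ be injective. For $a\in[N]$ set $\chi(a)=(1,f(a),f(a)^2,\dots,f(a)^{k-1})\in\mathbb F^k$. For $S\subseteq[N]$ let $\chi(S)=\bigwedge_{a\in S}\chi(a)\in\Lambda(\mathbb F^k)$, taken in increasing order of $a$, with $\chi(\emptyset)=1$. Let $y_1,\dots,y_n$ be indeterminates. Then there exists $T\subseteq[n]$ such that the sets $S_i$, $i\in T$, are pairwise disjoint and $\left|\bigcup_{i\in T}S_i\right|=k$ if and only if the coefficient of $e_{[k]}$ in $\prod_{i=1}^n(1+y_i\chi(S_i))$ is a nonzero polynomial in $\mathbb F[y_1,\dots,y_n]$.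
   Context: $\Lambda(\mathbb F^k)$ is the exterior algebra with basis $\{e_I:I\subseteq[k]\}$, where $e_I=e_{i_1}\wedge\cdots\wedge e_{i_r}$ for $I=\{i_1<\dots<i_r\}$. A vector $v\in\mathbb F^k$ is identified with $\sum_iv[i]e_i$. The product is taken in $\Lambda(\mathbb F^k)$ with coefficients in the polynomial ring $\mathbb F[y_1,\dots,y_n]$; in characteristic $2$ this algebra is commutative. For an element $x$, $[e_{[k]}]x$ denotes its coefficient on $e_{[k]}=e_1\wedge\cdots\wedge e_k$. *)

theory Defs
  imports Main "HOL-Library.Poly_Mapping"
begin

(* Multivariate polynomials F[y_1,y_2,...]: coefficient functions on monomials
   (exponent vectors nat =>0 nat), with the convolution ring structure from Poly_Mapping. *)
type_synonym 'a mpoly = "(nat \<Rightarrow>\<^sub>0 nat) \<Rightarrow>\<^sub>0 'a"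

definition Const :: "'a::zero \<Rightarrow> 'a mpoly" where
  "Const c = Poly_Mapping.single 0 c"

definition Var :: "nat \<Rightarrow> 'a::{zero,one} mpoly" where
  "Var i = Poly_Mapping.single (Poly_Mapping.single i 1) 1"

(* Exterior algebra Lambda(R^k) over a commutative ring R: an element is the
   coefficient function I \<mapsto> [e_I]x on subsets I of {1..k} (zero outside). *)
definition ext_sign :: "nat set \<Rightarrow> nat set \<Rightarrow> 'r::comm_ring_1" where
  "ext_sign I J = (-1) ^ card {(i,j). i \<in> I \<and> j \<in> J \<and> j < i}"

(* e_I \<and> e_J = ext_sign I J * e_(I \<union> J) if I, J disjoint, else 0 *)
definition ext_mult :: "nat \<Rightarrow> (nat set \<Rightarrow> 'r::comm_ring_1) \<Rightarrow> (nat set \<Rightarrow> 'r) \<Rightarrow> nat set \<Rightarrow> 'r" where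
  "ext_mult k x y K =
     (if K \<subseteq> {1..k} then (\<Sum>I\<in>Pow K. ext_sign I (K - I) * x I * y (K - I)) else 0)"

definition ext_one :: "nat set \<Rightarrow> 'r::comm_ring_1" where
  "ext_one K = (if K = {} then 1 else 0)"

definition ext_add :: "(nat set \<Rightarrow> 'r::comm_ring_1) \<Rightarrow> (nat set \<Rightarrow> 'r) \<Rightarrow> nat set \<Rightarrow> 'r" where
  "ext_add x y K = x K + y K"

definition ext_smult :: "'r::comm_ring_1 \<Rightarrow> (nat set \<Rightarrow> 'r) \<Rightarrow> nat set \<Rightarrow> 'r" where
  "ext_smult c x K = c * x K"

(* the vector v = (v[1],...,v[k]) identified with sum_i v[i] e_i *)
definition ext_vec :: "nat \<Rightarrow> (nat \<Rightarrow> 'r::comm_ring_1) \<Rightarrow> nat set \<Rightarrow> 'r" where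
  "ext_vec k v K = (if \<exists>i\<in>{1..k}. K = {i} then v (THE i. K = {i}) else 0)"

definition ext_wedge_list :: "nat \<Rightarrow> (nat set \<Rightarrow> 'r::comm_ring_1) list \<Rightarrow> nat set \<Rightarrow> 'r" where
  "ext_wedge_list k xs = foldr (ext_mult k) xs ext_one"

definition chi :: "nat \<Rightarrow> (nat \<Rightarrow> 'a::field) \<Rightarrow> nat \<Rightarrow> nat set \<Rightarrow> 'a mpoly" where
  "chi k f a = ext_vec k (\<lambda>i. Const (f a ^ (i - 1)))"

definition chiS :: "nat \<Rightarrow> (nat \<Rightarrow> 'a::field) \<Rightarrow> nat set \<Rightarrow> nat set \<Rightarrow> 'a mpoly" where
  "chiS k f S = ext_wedge_list k (map (chi k f) (sorted_list_of_set S))"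

definition gen_prod :: "nat \<Rightarrow> nat \<Rightarrow> (nat \<Rightarrow> 'a::field) \<Rightarrow> (nat \<Rightarrow> nat set) \<Rightarrow> nat set \<Rightarrow> 'a mpoly" where
  "gen_prod k n f S = ext_wedge_list k
     (map (\<lambda>i. ext_add ext_one (ext_smult (Var i) (chiS k f (S i)))) [1..<n+1])"

end

theory Submission
  imports Defs "HOL-Combinatorics.Multiset_Permutations" "HOL-Combinatorics.Permutations"
    "HOL-Library.Disjoint_Sets" "HOL-Computational_Algebra.Polynomial"
begin


definition M :: "(nat set \<Rightarrow> 'r::comm_ring_1) \<Rightarrow> (nat set \<Rightarrow> 'r) \<Rightarrow> nat set \<Rightarrow> 'r" where
  "M x y K = (\<Sum>I\<in>Pow K. x I * y (K - I))"

lemma M_one: "finite K \<Longrightarrow> M ext_one y K = y K"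
proof -
  assume K: "finite K"
  have "M ext_one y K = (\<Sum>I\<in>Pow K. if I = {} then y K else 0)"
    unfolding M_def ext_one_def by (rule sum.cong) auto
  also have "\<dots> = y K" using K by (simp add: sum.delta')
  finally show ?thesis .
qed

lemma M_cong: "(\<And>I. I \<subseteq> K \<Longrightarrow> x I = x' I) \<Longrightarrow> (\<And>I. I \<subseteq> K \<Longrightarrow> y I = y' I) \<Longrightarrow> M x y K = M x' y' K"
  unfolding M_def by (rule sum.cong) auto

lemma M_add_left: "M (ext_add a b) y K = M a y K + M b y K"
  unfolding M_def ext_add_def by (simp add: ring_distribs sum.distrib)

lemma M_smult_left: "M (ext_smult c a) y K = c * M a y K"
  unfolding M_def ext_smult_def by (simp add: sum_distrib_left mult.assoc)

lemma M_sum_right: "M x (\<lambda>K. \<Sum>T\<in>A. g T * h T K) K = (\<Sum>T\<in>A. g T * M x (h T) K)"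
  unfolding M_def by (simp add: sum_distrib_left sum.swap[of _ A] mult.left_commute)

lemma diff_aux: "B \<subseteq> A \<Longrightarrow> K - B - (A - B) = K - A" by blast

lemma M_assoc:
  assumes K: "finite K"
  shows "M (M x y) z K = M x (M y z) K"
proof -
  have "M (M x y) z K = (\<Sum>I\<in>Pow K. \<Sum>J\<in>Pow I. x J * y (I - J) * z (K - I))"
    unfolding M_def by (simp add: sum_distrib_right)
  also have "\<dots> = (\<Sum>(I,J)\<in>Sigma (Pow K) Pow. x J * y (I - J) * z (K - I))"
    by (subst sum.Sigma) (auto intro: finite_subset[OF _ K])
  also have "\<dots> = (\<Sum>(J,I)\<in>Sigma (Pow K) (\<lambda>J. Pow (K - J)). x J * y I * z (K - J - I))"
    by (rule sum.reindex_bij_witness[where i="\<lambda>(J,I). (I \<union> J, J)" and j="\<lambda>(I,J). (J, I - J)"])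
       (auto simp: Diff_Un Un_Diff diff_aux)
  also have "\<dots> = (\<Sum>J\<in>Pow K. \<Sum>I\<in>Pow (K - J). x J * y I * z (K - J - I))"
    by (subst sum.Sigma) (auto intro: finite_subset[OF _ K])
  also have "\<dots> = M x (M y z) K"
    unfolding M_def by (simp add: sum_distrib_left mult.assoc)
  finally show ?thesis .
qed

definition vec :: "(nat \<Rightarrow> 'r::comm_ring_1) \<Rightarrow> nat set \<Rightarrow> 'r" where
  "vec w K = (if \<exists>i. K = {i} then w (THE i. K = {i}) else 0)"

lemma vec_single [simp]: "vec w {i} = w i"
  unfolding vec_def by auto

lemma M_vec:
  assumes K: "finite K"
  shows "M (vec w) y K = (\<Sum>i\<in>K. w i * y (K - {i}))"
proof -
  have "M (vec w) y K = (\<Sum>I\<in>(\<lambda>i. {i}) ` K. vec w I * y (K - I))"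
    unfolding M_def
    by (rule sum.mono_neutral_right) (auto simp: K vec_def)
  also have "\<dots> = (\<Sum>i\<in>K. w i * y (K - {i}))"
    by (subst sum.reindex) (auto simp: inj_on_def)
  finally show ?thesis .
qed

definition pw :: "(nat \<Rightarrow> 'r::comm_ring_1) list \<Rightarrow> nat list \<Rightarrow> 'r" where
  "pw ws ks = (if length ws = length ks then \<Prod>j<length ws. (ws!j) (ks!j) else 0)"

lemma pw_Cons: "pw (w#ws) (k#ks) = w k * pw ws ks"
  unfolding pw_def by (auto simp del: prod.lessThan_Suc simp add: prod.lessThan_Suc_shift)

lemma pw_Nil_Nil [simp]: "pw [] [] = 1"
  unfolding pw_def by simp

lemma pw_Cons_Nil [simp]: "pw (w#ws) [] = 0"
  unfolding pw_def by simp

lemma pw_Nil_Cons [simp]: "pw [] (k#ks) = 0"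
  unfolding pw_def by simp

lemma perm_sum_Cons:
  assumes K: "finite K" "K \<noteq> {}"
  shows "(\<Sum>ks\<in>permutations_of_set K. pw (w#ws) ks)
       = (\<Sum>i\<in>K. w i * (\<Sum>ks\<in>permutations_of_set (K - {i}). pw ws ks))"
proof -
  have "(\<Sum>ks\<in>permutations_of_set K. pw (w#ws) ks)
      = (\<Sum>i\<in>K. \<Sum>ks\<in>(\<lambda>xs. i # xs) ` permutations_of_set (K - {i}). pw (w#ws) ks)"
    apply (subst permutations_of_set_nonempty[OF K(2)])
    apply (rule sum.UNION_disjoint)
    using K by auto
  also have "\<dots> = (\<Sum>i\<in>K. w i * (\<Sum>ks\<in>permutations_of_set (K - {i}). pw ws ks))"
    by (rule sum.cong; simp add: sum.reindex pw_Cons sum_distrib_left)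
  finally show ?thesis .
qed

lemma P_vec:
  "finite K \<Longrightarrow> List.foldr M (map vec ws) ext_one K = (\<Sum>ks\<in>permutations_of_set K. pw ws ks)"
proof (induction ws arbitrary: K)
  case Nil
  show ?case
  proof (cases "K = {}")
    case True then show ?thesis by (simp add: ext_one_def)
  next
    case False
    have "pw [] ks = 0" if "ks \<in> permutations_of_set K" for ks
      using that False by (cases ks) (auto dest: permutations_of_setD)
    then show ?thesis using False by (auto simp: ext_one_def intro!: sum.neutral)
  qed
next
  case (Cons w ws)
  show ?case
  proof (cases "K = {}")
    case True then show ?thesis by (simp add: M_def vec_def)
  next
    case False
    have "List.foldr M (map vec (w#ws)) ext_one K = M (vec w) (List.foldr M (map vec ws) ext_one) K" by simp
    also have "\<dots> = (\<Sum>i\<in>K. w i * List.foldr M (map vec ws) ext_one (K - {i}))"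
      using Cons.prems by (rule M_vec)
    also have "\<dots> = (\<Sum>i\<in>K. w i * (\<Sum>ks\<in>permutations_of_set (K - {i}). pw ws ks))"
      using Cons by simp
    also have "\<dots> = (\<Sum>ks\<in>permutations_of_set K. pw (w#ws) ks)"
      using Cons.prems False by (rule perm_sum_Cons[symmetric])
    finally show ?thesis .
  qed
qed



lemma pw_dup_sum:
  fixes ws :: "(nat \<Rightarrow> 'r::comm_ring_1) list"
  assumes two: "(2::'r) = 0" and p: "p < length ws" "q < length ws" "p \<noteq> q" "ws!p = ws!q"
  shows "(\<Sum>ks\<in>permutations_of_set K. pw ws ks) = 0"
proof (cases "card K = length ws")
  case False
  then show ?thesis
    by (auto simp: pw_def length_finite_permutations_of_set intro!: sum.neutral)
next
  case True
  define \<tau> where "\<tau> = Transposition.transpose p q"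
  have perm: "\<tau> permutes {..<length ws}" unfolding \<tau>_def using p by (intro permutes_swap_id) auto
  have wsj: "ws ! (\<tau> j) = ws ! j" for j unfolding \<tau>_def using p(4)
    by (cases "j = p"; cases "j = q") auto
  have len: "length ks = length ws" if "ks \<in> permutations_of_set K" for ks
    using that True by (simp add: length_finite_permutations_of_set)
  show ?thesis
  proof (rule sum_involution_eq_0[where h="permute_list \<tau>"])
    fix ks assume ks: "ks \<in> permutations_of_set K"
    have permk: "\<tau> permutes {..<length ks}" using perm len[OF ks] by simp
    have "pw ws (permute_list \<tau> ks) = (\<Prod>j<length ws. (ws!j) (ks ! \<tau> j))"
      unfolding pw_def using len[OF ks] permk by (simp add: permute_list_nth)
    also have "\<dots> = (\<Prod>j<length ws. (ws! \<tau> j) (ks ! \<tau> j))" by (simp add: wsj)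
    also have "\<dots> = (\<Prod>j<length ws. (ws!j) (ks ! j))"
      using prod.permute[OF perm, of "\<lambda>j. (ws!j) (ks ! j)"] by (simp add: comp_def)
    also have "\<dots> = pw ws ks" unfolding pw_def using len[OF ks] by simp
    finally have eq: "pw ws (permute_list \<tau> ks) = pw ws ks" .
    show "pw ws (permute_list \<tau> ks) + pw ws ks = 0"
      unfolding eq by (metis mult_2 two mult_zero_left)
    show "permute_list \<tau> ks \<in> permutations_of_set K"
      using ks permk by (auto simp: permutations_of_set_def)
    have "permute_list (\<tau> \<circ> \<tau>) ks = permute_list \<tau> (permute_list \<tau> ks)"
      by (rule permute_list_compose[OF permk])
    then show "permute_list \<tau> (permute_list \<tau> ks) = ks" unfolding \<tau>_def by simp
    have "permute_list \<tau> ks ! p = ks ! q"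
      using permk p len[OF ks] by (simp add: permute_list_nth \<tau>_def)
    moreover have "ks ! q \<noteq> ks ! p"
      using ks p len[OF ks] by (auto simp: permutations_of_set_def nth_eq_iff_index_eq)
    ultimately show "permute_list \<tau> ks \<noteq> ks" by metis
  qed
qed



definition W :: "'a::comm_ring_1 \<Rightarrow> nat \<Rightarrow> 'a" where "W x = (\<lambda>i. x ^ (i - 1))"

definition V :: "'a::comm_ring_1 list \<Rightarrow> 'a" where
  "V xs = (\<Sum>ks\<in>permutations_of_set {1..length xs}. pw (map W xs) ks)"

lemma V_nonzero:
  fixes xs :: "'a::field list"
  assumes two: "(2::'a) = 0" and "distinct xs"
  shows "V xs \<noteq> 0"
  using assms(2)
proof (induction xs)
  case Nil
  then show ?case by (simp add: V_def)
next
  case (Cons t xs)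
  define m where "m = length xs"
  define c where "c i = (\<Sum>ks\<in>permutations_of_set ({1..Suc m} - {i}). pw (map W xs) ks)" for i
  have ev: "(\<Sum>ks\<in>permutations_of_set {1..Suc m}. pw (W s # map W xs) ks) = (\<Sum>i\<in>{1..Suc m}. s^(i-1) * c i)" for s
    unfolding c_def using perm_sum_Cons[of "{1..Suc m}" "W s" "map W xs"] by (simp add: W_def)
  define q where "q = (\<Sum>i\<in>{1..Suc m}. monom (c i) (i-1))"
  have polyq: "poly q s = (\<Sum>i\<in>{1..Suc m}. s^(i-1) * c i)" for s
    unfolding q_def by (simp add: poly_sum poly_monom mult.commute)
  have "coeff q m = (\<Sum>i\<in>{1..Suc m}. if i - 1 = m then c i else 0)"
    unfolding q_def by (simp add: coeff_sum)
  also have "\<dots> = (\<Sum>i\<in>{1..Suc m}. if i = Suc m then c i else 0)"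
    by (rule sum.cong) auto
  also have "\<dots> = c (Suc m)" by simp
  also have "\<dots> = V xs" unfolding c_def V_def m_def
    by (simp add: atLeastAtMostSuc_conv)
  finally have cq: "coeff q m = V xs" .
  have q0: "q \<noteq> 0" using cq Cons by auto
  have dq: "degree q \<le> m" unfolding q_def
    apply (rule degree_sum_le, simp)
    apply (rule le_trans[OF degree_monom_le])
    by auto
  have roots: "poly q x = 0" if xin: "x \<in> set xs" for x
  proof -
    obtain j where j: "j < length xs" "xs ! j = x" using xin unfolding in_set_conv_nth by blast
    have "poly q x = (\<Sum>ks\<in>permutations_of_set {1..Suc m}. pw (W x # map W xs) ks)"
      by (simp only: polyq ev)
    also have "\<dots> = 0"
      by (rule pw_dup_sum[OF two, of 0 _ "Suc j"]) (use j in simp_all)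
    finally show ?thesis .
  qed
  show ?case
  proof
    assume "V (t # xs) = 0"
    moreover have "V (t # xs) = poly q t" unfolding polyq ev[symmetric] unfolding V_def m_def by simp
    ultimately have "poly q t = 0" by simp
    then have sub: "insert t (set xs) \<subseteq> {x. poly q x = 0}" using roots by auto
    have "Suc m = card (insert t (set xs))"
      using Cons.prems by (simp add: m_def distinct_card)
    also have "\<dots> \<le> card {x. poly q x = 0}"
      by (rule card_mono[OF poly_roots_finite[OF q0] sub])
    also have "\<dots> \<le> degree q" by (rule card_poly_roots_bound[OF q0])
    finally show False using dq by simp
  qed
qed



lemma ext_mult_M:
  assumes neg: "(-1::'r::comm_ring_1) = 1" and K: "K \<subseteq> {1..k}"
  shows "ext_mult k x y K = M x (y::nat set \<Rightarrow> 'r) K"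
  unfolding ext_mult_def M_def ext_sign_def using K by (simp add: neg)

lemma wedge_agree:
  assumes neg: "(-1::'r::comm_ring_1) = 1"
    and rel: "list_all2 (\<lambda>x x'. \<forall>I\<subseteq>{1..k}. x I = (x' I::'r)) xs xs'"
  shows "\<forall>K\<subseteq>{1..k}. List.foldr (ext_mult k) xs ext_one K = List.foldr M xs' ext_one K"
  using rel
proof (induction rule: list_all2_induct)
  case Nil then show ?case by simp
next
  case (Cons x xs x' xs')
  show ?case
  proof (intro allI impI)
    fix K assume K: "K \<subseteq> {1..k}"
    have "List.foldr (ext_mult k) (x#xs) ext_one K = M x (List.foldr (ext_mult k) xs ext_one) K"
      using ext_mult_M[OF neg K] by simp
    also have "\<dots> = M x' (List.foldr M xs' ext_one) K"
      by (rule M_cong) (use Cons K in auto)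
    finally show "List.foldr (ext_mult k) (x#xs) ext_one K = List.foldr M (x'#xs') ext_one K" by simp
  qed
qed

lemma expand:
  fixes Y :: "nat \<Rightarrow> 'r::comm_ring_1"
  assumes "distinct L"
  shows "finite K \<Longrightarrow> List.foldr M (map (\<lambda>i. ext_add ext_one (ext_smult (Y i) (C i))) L) ext_one K
     = (\<Sum>T\<in>Pow (set L). (\<Prod>i\<in>T. Y i) * List.foldr M (map C (filter (\<lambda>i. i \<in> T) L)) ext_one K)"
  using assms
proof (induction L arbitrary: K)
  case Nil
  then show ?case by simp
next
  case (Cons a L)
  define E where "E = List.foldr M (map (\<lambda>i. ext_add ext_one (ext_smult (Y i) (C i))) L) ext_one"
  define F where "F T = List.foldr M (map C (filter (\<lambda>i. i \<in> T) L)) ext_one" for T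
  have aL: "a \<notin> set L" "distinct L" using Cons.prems by auto
  have IH: "E K' = (\<Sum>T\<in>Pow (set L). (\<Prod>i\<in>T. Y i) * F T K')" if "finite K'" for K'
    unfolding E_def F_def using Cons.IH[OF that aL(2)] .
  have "List.foldr M (map (\<lambda>i. ext_add ext_one (ext_smult (Y i) (C i))) (a#L)) ext_one K
      = M (ext_add ext_one (ext_smult (Y a) (C a))) E K" by (simp add: E_def)
  also have "\<dots> = E K + Y a * M (C a) E K"
    by (simp add: M_add_left M_smult_left M_one Cons.prems)
  also have "M (C a) E K = M (C a) (\<lambda>K'. \<Sum>T\<in>Pow (set L). (\<Prod>i\<in>T. Y i) * F T K') K"
    by (rule M_cong) (auto intro!: IH finite_subset[OF _ Cons.prems(1)])
  also have "\<dots> = (\<Sum>T\<in>Pow (set L). (\<Prod>i\<in>T. Y i) * M (C a) (F T) K)"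
    by (rule M_sum_right)
  finally have lhs: "List.foldr M (map (\<lambda>i. ext_add ext_one (ext_smult (Y i) (C i))) (a#L)) ext_one K
     = (\<Sum>T\<in>Pow (set L). (\<Prod>i\<in>T. Y i) * F T K) + (\<Sum>T\<in>Pow (set L). Y a * ((\<Prod>i\<in>T. Y i) * M (C a) (F T) K))"
    using IH[OF Cons.prems(1)] by (simp add: sum_distrib_left)
  define G where "G T = (\<Prod>i\<in>T. Y i) * List.foldr M (map C (filter (\<lambda>i. i \<in> T) (a#L))) ext_one K" for T
  have "(\<Sum>T\<in>Pow (set (a#L)). G T) = (\<Sum>T\<in>Pow (set L) \<union> insert a ` Pow (set L). G T)"
    by (simp add: Pow_insert)
  also have "\<dots> = (\<Sum>T\<in>Pow (set L). G T) + (\<Sum>T\<in>insert a ` Pow (set L). G T)"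
    by (rule sum.union_disjoint) (use aL in auto)
  also have "(\<Sum>T\<in>insert a ` Pow (set L). G T) = (\<Sum>T\<in>Pow (set L). G (insert a T))"
    by (rule sum.reindex_cong[where l="insert a"]) (use aL in \<open>auto simp: inj_on_def\<close>)
  also have "(\<Sum>T\<in>Pow (set L). G T) = (\<Sum>T\<in>Pow (set L). (\<Prod>i\<in>T. Y i) * F T K)"
  proof (rule sum.cong)
    fix T assume "T \<in> Pow (set L)"
    then have "a \<notin> T" using aL by auto
    then show "G T = (\<Prod>i\<in>T. Y i) * F T K" by (simp add: G_def F_def)
  qed simp
  also have "(\<Sum>T\<in>Pow (set L). G (insert a T)) = (\<Sum>T\<in>Pow (set L). Y a * ((\<Prod>i\<in>T. Y i) * M (C a) (F T) K))"
  proof (rule sum.cong)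
    fix T assume T: "T \<in> Pow (set L)"
    then have aT: "a \<notin> T" "finite T" using aL by (auto intro: finite_subset)
    have fil: "filter (\<lambda>i. i = a \<or> i \<in> T) L = filter (\<lambda>i. i \<in> T) L"
      by (rule filter_cong) (use aL in auto)
    show "G (insert a T) = Y a * ((\<Prod>i\<in>T. Y i) * M (C a) (F T) K)"
      using aT by (simp add: G_def F_def fil mult_ac)
  qed simp
  finally show ?case unfolding lhs G_def by simp
qed

lemma M_P:
  "finite K \<Longrightarrow> M (List.foldr M xs ext_one) R K = List.foldr M xs R K"
proof (induction xs arbitrary: K)
  case Nil then show ?case by (simp add: M_one)
next
  case (Cons x xs)
  have "M (List.foldr M (x#xs) ext_one) R K = M x (M (List.foldr M xs ext_one) R) K"
    using M_assoc[OF Cons.prems] by simp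
  also have "\<dots> = M x (List.foldr M xs R) K"
    by (rule M_cong) (auto intro!: Cons.IH finite_subset[OF _ Cons.prems])
  finally show ?case by simp
qed

lemma P_concat:
  "finite K \<Longrightarrow> List.foldr M (map (\<lambda>i. List.foldr M (xs i) ext_one) L) ext_one K
     = List.foldr M (concat (map xs L)) ext_one K"
proof (induction L arbitrary: K)
  case Nil then show ?case by simp
next
  case (Cons a L)
  have "List.foldr M (map (\<lambda>i. List.foldr M (xs i) ext_one) (a#L)) ext_one K
     = M (List.foldr M (xs a) ext_one) (List.foldr M (map (\<lambda>i. List.foldr M (xs i) ext_one) L) ext_one) K"
    by simp
  also have "\<dots> = M (List.foldr M (xs a) ext_one) (List.foldr M (concat (map xs L)) ext_one) K"
    by (rule M_cong) (auto intro!: Cons.IH finite_subset[OF _ Cons.prems])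
  also have "\<dots> = List.foldr M (xs a) (List.foldr M (concat (map xs L)) ext_one) K"
    by (rule M_P[OF Cons.prems])
  finally show ?case by simp
qed



lemma two_mpoly:
  assumes two: "(2::'a::comm_ring_1) = 0"
  shows "(2::'a mpoly) = 0"
proof -
  have "(2::'a mpoly) = Poly_Mapping.single 0 (2::'a)" by simp
  also have "\<dots> = 0" by (simp add: two)
  finally show ?thesis .
qed

lemma neg_one_mpoly:
  assumes two: "(2::'a::comm_ring_1) = 0"
  shows "(-1::'a mpoly) = 1"
proof -
  have "(1::'a mpoly) + 1 = 0" using two_mpoly[OF two] by (simp add: one_add_one)
  then show ?thesis by (metis eq_neg_iff_add_eq_0)
qed

lemma Const_mult: "Const a * Const b = (Const (a * b) :: 'a::comm_ring_1 mpoly)"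
  unfolding Const_def by (simp add: mult_single)

lemma Const_one: "Const 1 = (1 :: 'a::comm_ring_1 mpoly)"
  unfolding Const_def by simp

lemma Const_zero: "Const 0 = (0 :: 'a::comm_ring_1 mpoly)"
  unfolding Const_def by simp

lemma Const_add: "Const (a + b) = (Const a + Const b :: 'a::comm_ring_1 mpoly)"
  unfolding Const_def by (simp add: single_add)

lemma Const_prod: "Const (\<Prod>j\<in>A. g j) = (\<Prod>j\<in>A. Const (g j) :: 'a::comm_ring_1 mpoly)"
  by (induction A rule: infinite_finite_induct) (simp_all add: Const_one Const_mult[symmetric])

lemma Const_sum: "Const (\<Sum>j\<in>A. g j) = (\<Sum>j\<in>A. Const (g j) :: 'a::comm_ring_1 mpoly)"
  by (induction A rule: infinite_finite_induct) (simp_all add: Const_zero Const_add)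

lemma pw_Const:
  "pw (map (\<lambda>a i. Const (g a i)) A) ks = (Const (pw (map g A) ks) :: 'a::comm_ring_1 mpoly)"
  unfolding pw_def by (simp add: Const_prod Const_zero)

lemma prod_Var:
  "finite T \<Longrightarrow> (\<Prod>i\<in>T. Var i :: 'a::comm_ring_1 mpoly)
     = Poly_Mapping.single (\<Sum>i\<in>T. Poly_Mapping.single i (1::nat)) 1"
  by (induction T rule: finite_induct) (simp_all add: Var_def mult_single add.commute)

lemma lookup_mT:
  "finite T \<Longrightarrow> Poly_Mapping.lookup (\<Sum>i\<in>T. Poly_Mapping.single i (1::nat)) j = (if j \<in> T then 1 else 0)"
  by (simp add: lookup_sum lookup_single when_def)

lemma mT_inj:
  assumes "finite T1" "finite T2"
    and "(\<Sum>i\<in>T1. Poly_Mapping.single i (1::nat)) = (\<Sum>i\<in>T2. Poly_Mapping.single i (1::nat))"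
  shows "T1 = T2"
proof -
  have "(j \<in> T1) = (j \<in> T2)" for j
  proof -
    have "Poly_Mapping.lookup (\<Sum>i\<in>T1. Poly_Mapping.single i (1::nat)) j
        = Poly_Mapping.lookup (\<Sum>i\<in>T2. Poly_Mapping.single i (1::nat)) j" using assms(3) by simp
    then show ?thesis
      unfolding lookup_mT[OF assms(1)] lookup_mT[OF assms(2)] by (cases "j \<in> T1"; cases "j \<in> T2") simp_all
  qed
  then show ?thesis by blast
qed

definition Av :: "(nat \<Rightarrow> nat set) \<Rightarrow> nat set \<Rightarrow> nat \<Rightarrow> nat list" where
  "Av S T n = concat (map (\<lambda>i. sorted_list_of_set (S i)) (filter (\<lambda>i. i \<in> T) [1..<n+1]))"

definition dT :: "(nat \<Rightarrow> 'a::field) \<Rightarrow> (nat \<Rightarrow> nat set) \<Rightarrow> nat set \<Rightarrow> nat \<Rightarrow> nat \<Rightarrow> 'a" where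
  "dT f S T n k = (\<Sum>ks\<in>permutations_of_set {1..k}. pw (map (\<lambda>a. W (f a)) (Av S T n)) ks)"

lemma gen_prod_expand:
  fixes f :: "nat \<Rightarrow> 'a::field"
  assumes two: "(2::'a) = 0"
  shows "gen_prod k n f S {1..k}
     = (\<Sum>T\<in>Pow {1..n}. Poly_Mapping.single (\<Sum>i\<in>T. Poly_Mapping.single i (1::nat)) (dT f S T n k))"
proof -
  have neg: "(-1::'a mpoly) = 1" by (rule neg_one_mpoly[OF two])
  define wC where "wC a = (\<lambda>i. Const (f a ^ (i-1)) :: 'a mpoly)" for a
  define C where "C i = List.foldr M (map vec (map wC (sorted_list_of_set (S i)))) ext_one" for i
  define L where "L = [1..<n+1]"
  have chiS_eq: "\<forall>K\<subseteq>{1..k}. chiS k f (S i) K = C i K" for i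
    unfolding chiS_def ext_wedge_list_def C_def
    by (rule wedge_agree[OF neg]) (auto simp: list_all2_conv_all_nth chi_def ext_vec_def vec_def wC_def)
  have rel: "list_all2 (\<lambda>x x'. \<forall>I\<subseteq>{1..k}. x I = x' I)
     (map (\<lambda>i. ext_add ext_one (ext_smult (Var i) (chiS k f (S i)))) L)
     (map (\<lambda>i. ext_add ext_one (ext_smult (Var i) (C i))) L)"
    using chiS_eq by (auto simp: list_all2_conv_all_nth ext_add_def ext_smult_def)
  have "gen_prod k n f S {1..k} = List.foldr M (map (\<lambda>i. ext_add ext_one (ext_smult (Var i) (C i))) L) ext_one {1..k}"
    using wedge_agree[OF neg rel] unfolding gen_prod_def ext_wedge_list_def L_def by simp
  also have "\<dots> = (\<Sum>T\<in>Pow (set L). (\<Prod>i\<in>T. Var i) * List.foldr M (map C (filter (\<lambda>i. i \<in> T) L)) ext_one {1..k})"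
    by (rule expand) (simp_all add: L_def)
  also have "\<dots> = (\<Sum>T\<in>Pow {1..n}. Poly_Mapping.single (\<Sum>i\<in>T. Poly_Mapping.single i (1::nat)) (dT f S T n k))"
  proof (rule sum.cong)
    show "Pow (set L) = Pow {1..n}" unfolding L_def by auto
  next
    fix T assume T: "T \<in> Pow {1..n}"
    then have fT: "finite T" by (auto intro: finite_subset)
    have "List.foldr M (map C (filter (\<lambda>i. i \<in> T) L)) ext_one {1..k}
        = List.foldr M (concat (map (\<lambda>i. map vec (map wC (sorted_list_of_set (S i)))) (filter (\<lambda>i. i \<in> T) L))) ext_one {1..k}"
      unfolding C_def by (rule P_concat) simp
    also have "\<dots> = List.foldr M (map vec (map wC (Av S T n))) ext_one {1..k}"
      unfolding Av_def L_def by (simp only: map_concat map_map comp_def)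
    also have "\<dots> = (\<Sum>ks\<in>permutations_of_set {1..k}. pw (map wC (Av S T n)) ks)"
      by (rule P_vec) simp
    also have "\<dots> = Const (dT f S T n k)"
      unfolding dT_def Const_sum wC_def W_def by (simp add: pw_Const)
    finally have eq: "List.foldr M (map C (filter (\<lambda>i. i \<in> T) L)) ext_one {1..k} = Const (dT f S T n k)" .
    show "(\<Prod>i\<in>T. Var i) * List.foldr M (map C (filter (\<lambda>i. i \<in> T) L)) ext_one {1..k}
        = Poly_Mapping.single (\<Sum>i\<in>T. Poly_Mapping.single i (1::nat)) (dT f S T n k)"
      unfolding eq prod_Var[OF fT] Const_def by (simp add: mult_single)
  qed
  finally show ?thesis .
qed



lemma distinct_concat_sorted:
  "distinct L \<Longrightarrow> (\<forall>i\<in>set L. finite (S i)) \<Longrightarrow>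
   distinct (concat (map (\<lambda>i. sorted_list_of_set (S i)) L)) \<longleftrightarrow>
   (\<forall>i\<in>set L. \<forall>j\<in>set L. i \<noteq> j \<longrightarrow> S i \<inter> S j = {})"
proof (induction L)
  case Nil then show ?case by simp
next
  case (Cons a L)
  have setc: "set (concat (map (\<lambda>i. sorted_list_of_set (S i)) L)) = (\<Union>i\<in>set L. S i)"
    using Cons.prems by auto
  have "distinct (concat (map (\<lambda>i. sorted_list_of_set (S i)) (a#L))) \<longleftrightarrow>
        distinct (concat (map (\<lambda>i. sorted_list_of_set (S i)) L)) \<and> S a \<inter> (\<Union>i\<in>set L. S i) = {}"
    using Cons.prems setc by (simp add: distinct_append)
  also have "\<dots> \<longleftrightarrow> (\<forall>i\<in>set L. \<forall>j\<in>set L. i \<noteq> j \<longrightarrow> S i \<inter> S j = {}) \<and> S a \<inter> (\<Union>i\<in>set L. S i) = {}"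
    using Cons by simp
  also have "\<dots> \<longleftrightarrow> (\<forall>i\<in>set (a#L). \<forall>j\<in>set (a#L). i \<noteq> j \<longrightarrow> S i \<inter> S j = {})"
    using Cons.prems by (auto; blast)
  finally show ?case .
qed

lemma good_iff:
  fixes f :: "nat \<Rightarrow> 'a::field"
  assumes two: "(2::'a) = 0" and S: "\<forall>i\<in>{1..n}. S i \<subseteq> {1..N}" and inj: "inj_on f {1..N}"
    and T: "T \<subseteq> {1..n}"
  shows "dT f S T n k \<noteq> 0 \<longleftrightarrow> ((\<forall>i\<in>T. \<forall>j\<in>T. i \<noteq> j \<longrightarrow> S i \<inter> S j = {}) \<and> card (\<Union>i\<in>T. S i) = k)"
proof -
  define A where "A = Av S T n"
  have fin: "\<forall>i\<in>T. finite (S i)" using S T by (auto intro: finite_subset)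
  have setF: "set (filter (\<lambda>i. i \<in> T) [1..<n+1]) = T" using T by auto
  have distF: "distinct (filter (\<lambda>i. i \<in> T) [1..<n+1])" by simp
  have setA: "set A = (\<Union>i\<in>T. S i)" unfolding A_def Av_def using fin setF by auto
  have distA: "distinct A \<longleftrightarrow> (\<forall>i\<in>T. \<forall>j\<in>T. i \<noteq> j \<longrightarrow> S i \<inter> S j = {})"
  proof -
    have fin': "\<forall>i\<in>set (filter (\<lambda>i. i \<in> T) [1..<n+1]). finite (S i)" unfolding setF by (rule fin)
    show ?thesis unfolding A_def Av_def distinct_concat_sorted[OF distF fin'] setF ..
  qed
  have dT_eq: "dT f S T n k = (\<Sum>ks\<in>permutations_of_set {1..k}. pw (map (\<lambda>a. W (f a)) A) ks)"
    unfolding dT_def A_def ..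
  show ?thesis
  proof
    assume nz: "dT f S T n k \<noteq> 0"
    have dA: "distinct A"
    proof (rule ccontr)
      assume "\<not> distinct A"
      then obtain p q where pq: "p < length A" "q < length A" "p \<noteq> q" "A ! p = A ! q"
        by (auto simp: distinct_conv_nth)
      have "dT f S T n k = 0" unfolding dT_eq
        by (rule pw_dup_sum[OF two, of p _ q]) (use pq in simp_all)
      then show False using nz by simp
    qed
    have lA: "length A = k"
    proof (rule ccontr)
      assume "length A \<noteq> k"
      then have "dT f S T n k = 0" unfolding dT_eq
        by (auto simp: pw_def length_finite_permutations_of_set intro!: sum.neutral)
      then show False using nz by simp
    qed
    show "(\<forall>i\<in>T. \<forall>j\<in>T. i \<noteq> j \<longrightarrow> S i \<inter> S j = {}) \<and> card (\<Union>i\<in>T. S i) = k"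
      using dA distA setA lA distinct_card[OF dA] by simp
  next
    assume good: "(\<forall>i\<in>T. \<forall>j\<in>T. i \<noteq> j \<longrightarrow> S i \<inter> S j = {}) \<and> card (\<Union>i\<in>T. S i) = k"
    then have dA: "distinct A" using distA by simp
    have lA: "length A = k" using distinct_card[OF dA] setA good by simp
    have "set A \<subseteq> {1..N}" using setA S T by auto
    then have "inj_on f (set A)" using inj by (rule inj_on_subset[rotated])
    then have dfA: "distinct (map f A)" using dA by (simp add: distinct_map)
    have "V (map f A) \<noteq> 0" by (rule V_nonzero[OF two dfA])
    moreover have "V (map f A) = dT f S T n k"
      unfolding dT_eq V_def using lA by (simp add: comp_def)
    ultimately show "dT f S T n k \<noteq> 0" by simp
  qed
qed

theorem mainTheorem11:
  fixes n N k :: nat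
    and S :: "nat \<Rightarrow> nat set"
    and f :: "nat \<Rightarrow> 'a::field"
  assumes "\<forall>i\<in>{1..n}. S i \<subseteq> {1..N}"
    and "k \<ge> 1"
    and "CHAR('a) = 2"
    and "infinite (UNIV :: 'a set) \<or> N \<le> card (UNIV :: 'a set)"
    and "inj_on f {1..N}"
  shows "(\<exists>T\<subseteq>{1..n}. (\<forall>i\<in>T. \<forall>j\<in>T. i \<noteq> j \<longrightarrow> S i \<inter> S j = {})
              \<and> card (\<Union>i\<in>T. S i) = k)
         \<longleftrightarrow> gen_prod k n f S {1..k} \<noteq> 0"
proof -
  have two: "(2::'a) = 0" using assms(3) of_nat_CHAR[where 'a='a] by simp
  define mT where "mT T = (\<Sum>i\<in>T. Poly_Mapping.single i (1::nat))" for T :: "nat set"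
  have G: "gen_prod k n f S {1..k} = (\<Sum>T\<in>Pow {1..n}. Poly_Mapping.single (mT T) (dT f S T n k))"
    unfolding mT_def by (rule gen_prod_expand[OF two])
  have good: "dT f S T n k \<noteq> 0 \<longleftrightarrow> ((\<forall>i\<in>T. \<forall>j\<in>T. i \<noteq> j \<longrightarrow> S i \<inter> S j = {}) \<and> card (\<Union>i\<in>T. S i) = k)"
    if "T \<subseteq> {1..n}" for T :: "nat set"
    by (rule good_iff[OF two assms(1) assms(5) that])
  show ?thesis
  proof
    assume "\<exists>T\<subseteq>{1..n}. (\<forall>i\<in>T. \<forall>j\<in>T. i \<noteq> j \<longrightarrow> S i \<inter> S j = {}) \<and> card (\<Union>i\<in>T. S i) = k"
    then obtain T where T: "T \<subseteq> {1..n}" "(\<forall>i\<in>T. \<forall>j\<in>T. i \<noteq> j \<longrightarrow> S i \<inter> S j = {}) \<and> card (\<Union>i\<in>T. S i) = k"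
      by blast
    have nz: "dT f S T n k \<noteq> 0" using good[OF T(1)] T(2) by simp
    have fT: "finite T" using T(1) by (auto intro: finite_subset)
    have "Poly_Mapping.lookup (gen_prod k n f S {1..k}) (mT T)
        = (\<Sum>T'\<in>Pow {1..n}. Poly_Mapping.lookup (Poly_Mapping.single (mT T') (dT f S T' n k)) (mT T))"
      unfolding G by (rule lookup_sum)
    also have "\<dots> = (\<Sum>T'\<in>Pow {1..n}. if T' = T then dT f S T' n k else 0)"
    proof (rule sum.cong)
      fix T' assume "T' \<in> Pow {1..n}"
      then have fT': "finite T'" by (auto intro: finite_subset)
      have "mT T' = mT T \<longleftrightarrow> T' = T"
        using mT_inj[OF fT' fT] unfolding mT_def by blast
      then show "Poly_Mapping.lookup (Poly_Mapping.single (mT T') (dT f S T' n k)) (mT T)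
          = (if T' = T then dT f S T' n k else 0)"
        by (simp add: lookup_single when_def)
    qed simp
    also have "\<dots> = dT f S T n k" using T(1) by simp
    finally have "Poly_Mapping.lookup (gen_prod k n f S {1..k}) (mT T) \<noteq> 0" using nz by simp
    then show "gen_prod k n f S {1..k} \<noteq> 0" by auto
  next
    assume ne: "gen_prod k n f S {1..k} \<noteq> 0"
    have "\<exists>T\<in>Pow {1..n}. dT f S T n k \<noteq> 0"
    proof (rule ccontr)
      assume "\<not> (\<exists>T\<in>Pow {1..n}. dT f S T n k \<noteq> 0)"
      then have "gen_prod k n f S {1..k} = 0" unfolding G by (auto intro!: sum.neutral)
      then show False using ne by simp
    qed
    then obtain T where T: "T \<subseteq> {1..n}" "dT f S T n k \<noteq> 0" by blast
    then show "\<exists>T\<subseteq>{1..n}. (\<forall>i\<in>T. \<forall>j\<in>T. i \<noteq> j \<longrightarrow> S i \<inter> S j = {}) \<and> card (\<Union>i\<in>T. S i) = k"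
      using good[OF T(1)] by blast
  qed
qed

end
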